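(* Let $D=\{z\in\mathbb C:|z|<1\}$, $\overline D$ its closure, $I=[0,1]$, $K=\overline D\times I$, and let $B$ be the uniform algebra of all continuous functions $f:K\to\mathbb C$ such that $z\mapsto f(z,1)$ is analytic on $D$. Let $A=\{f\in B: f(0,1)=0\}$. Then the character space $\mathcal M(A)$ consists exactly of the evaluation functionals $\chi_x:f\mapsto f(x)$ at points $x\in K\setminus\{(0,1)\}$, and the Shilov boundary of $A$ equals $\mathcal M(A)$. *)

theory Defs
  imports "HOL-Analysis.Analysis"
begin

definition Kset :: "(complex \<times> real) set" where
  "Kset = cball 0 1 \<times> {0..1}"

text \<open>The uniform algebra B, realised as functions on K (extended by 0 outside K,
  so that elements of B correspond exactly to functions K -> C).\<close>
definition Balg :: "(complex \<times> real \<Rightarrow> complex) set" where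
  "Balg = {f. continuous_on Kset f \<and> (\<lambda>z. f (z, 1)) analytic_on ball 0 1
              \<and> (\<forall>x. x \<notin> Kset \<longrightarrow> f x = 0)}"

definition Aalg :: "(complex \<times> real \<Rightarrow> complex) set" where
  "Aalg = {f \<in> Balg. f (0, 1) = 0}"

definition character :: "('a \<Rightarrow> complex) set \<Rightarrow> (('a \<Rightarrow> complex) \<Rightarrow> complex) \<Rightarrow> bool" where
  "character A \<phi> \<longleftrightarrow>
     (\<forall>f\<in>A. \<forall>g\<in>A. \<phi> (\<lambda>x. f x + g x) = \<phi> f + \<phi> g) \<and>
     (\<forall>c. \<forall>f\<in>A. \<phi> (\<lambda>x. c * f x) = c * \<phi> f) \<and>
     (\<forall>f\<in>A. \<forall>g\<in>A. \<phi> (\<lambda>x. f x * g x) = \<phi> f * \<phi> g) \<and>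
     (\<exists>f\<in>A. \<phi> f \<noteq> 0)"

definition char_space :: "('a \<Rightarrow> complex) set \<Rightarrow> (('a \<Rightarrow> complex) \<Rightarrow> complex) set" where
  "char_space A = {\<phi> \<in> extensional A. character A \<phi>}"

definition gelfand_topology :: "('a \<Rightarrow> complex) set \<Rightarrow> (('a \<Rightarrow> complex) \<Rightarrow> complex) topology" where
  "gelfand_topology A = topology_generated_by
     {{\<phi> \<in> char_space A. \<phi> f \<in> U} | f U. f \<in> A \<and> open U}"

definition is_boundary :: "('a \<Rightarrow> complex) set \<Rightarrow> (('a \<Rightarrow> complex) \<Rightarrow> complex) set \<Rightarrow> bool" where
  "is_boundary A S \<longleftrightarrow> S \<subseteq> char_space A \<and>
     (\<forall>f\<in>A. (SUP \<phi>\<in>S. ereal (cmod (\<phi> f))) = (SUP \<phi>\<in>char_space A. ereal (cmod (\<phi> f))))"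

definition shilov_boundary :: "('a \<Rightarrow> complex) set \<Rightarrow> (('a \<Rightarrow> complex) \<Rightarrow> complex) set" where
  "shilov_boundary A = \<Inter> {S. is_boundary A S \<and> closedin (gelfand_topology A) S}"

end

theory Submission
  imports Defs "HOL-Complex_Analysis.Cauchy_Integral_Formula"
begin

definition kr :: "(complex \<times> real \<Rightarrow> complex) \<Rightarrow> (complex \<times> real \<Rightarrow> complex)" where
  "kr g = (\<lambda>x. if x \<in> Kset then g x else 0)"

lemma Kset_iff: "(z, t) \<in> Kset \<longleftrightarrow> cmod z \<le> 1 \<and> 0 \<le> t \<and> t \<le> 1"
  by (auto simp: Kset_def)

lemma ball_K: "z \<in> ball 0 1 \<Longrightarrow> (z, 1) \<in> Kset"
  by (auto simp: Kset_def)

lemma compact_K: "compact Kset"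
  unfolding Kset_def by (intro compact_Times) auto

lemma kr_in_B:
  assumes "continuous_on Kset g" "(\<lambda>z. g (z, 1)) holomorphic_on ball 0 1"
  shows "kr g \<in> Balg"
proof -
  have "continuous_on Kset (kr g)"
    using assms(1) by (rule continuous_on_eq) (auto simp: kr_def)
  moreover have "(\<lambda>z. kr g (z, 1)) holomorphic_on ball 0 1"
    using assms(2) by (rule holomorphic_transform) (auto simp: kr_def ball_K)
  ultimately show ?thesis
    by (auto simp: Balg_def kr_def analytic_on_open)
qed

lemma B_D:
  assumes "f \<in> Balg"
  shows "continuous_on Kset f" "(\<lambda>z. f (z, 1)) holomorphic_on ball 0 1"
        "\<And>x. x \<notin> Kset \<Longrightarrow> f x = 0" "kr f = f"
  using assms by (auto simp: Balg_def analytic_on_open kr_def)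

lemma B_add: "f \<in> Balg \<Longrightarrow> g \<in> Balg \<Longrightarrow> (\<lambda>x. f x + g x) \<in> Balg"
  unfolding Balg_def by (auto intro!: continuous_intros analytic_intros)

lemma B_mult: "f \<in> Balg \<Longrightarrow> g \<in> Balg \<Longrightarrow> (\<lambda>x. f x * g x) \<in> Balg"
  unfolding Balg_def by (auto intro!: continuous_intros analytic_intros)

lemma B_cmult: "f \<in> Balg \<Longrightarrow> (\<lambda>x. c * f x) \<in> Balg"
  unfolding Balg_def by (auto intro!: continuous_intros analytic_intros)

lemma B_diff: "f \<in> Balg \<Longrightarrow> g \<in> Balg \<Longrightarrow> (\<lambda>x. f x - g x) \<in> Balg"
  unfolding Balg_def by (auto intro!: continuous_intros analytic_intros)

definition "eK = kr (\<lambda>_. 1)"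
definition "ZK = kr (\<lambda>x. fst x)"
definition "TK = kr (\<lambda>x. complex_of_real (snd x))"

lemma eK_B: "eK \<in> Balg" unfolding eK_def by (rule kr_in_B) (auto intro!: holomorphic_intros)
lemma ZK_B: "ZK \<in> Balg" unfolding ZK_def by (rule kr_in_B) (auto intro!: holomorphic_intros continuous_intros)
lemma TK_B: "TK \<in> Balg" unfolding TK_def by (rule kr_in_B) (auto intro!: holomorphic_intros continuous_intros)

lemma eK_mult: "f \<in> Balg \<Longrightarrow> (\<lambda>x. eK x * f x) = f"
  by (auto simp: eK_def kr_def Balg_def)

definition bchar :: "((complex \<times> real \<Rightarrow> complex) \<Rightarrow> complex) \<Rightarrow> bool" where
  "bchar \<psi> \<longleftrightarrow>
     (\<forall>f\<in>Balg. \<forall>g\<in>Balg. \<psi> (\<lambda>x. f x + g x) = \<psi> f + \<psi> g) \<and>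
     (\<forall>c. \<forall>f\<in>Balg. \<psi> (\<lambda>x. c * f x) = c * \<psi> f) \<and>
     (\<forall>f\<in>Balg. \<forall>g\<in>Balg. \<psi> (\<lambda>x. f x * g x) = \<psi> f * \<psi> g) \<and> \<psi> eK = 1"

lemma bchar_add: "bchar \<psi> \<Longrightarrow> f \<in> Balg \<Longrightarrow> g \<in> Balg \<Longrightarrow> \<psi> (\<lambda>x. f x + g x) = \<psi> f + \<psi> g"
  by (simp add: bchar_def)
lemma bchar_mult: "bchar \<psi> \<Longrightarrow> f \<in> Balg \<Longrightarrow> g \<in> Balg \<Longrightarrow> \<psi> (\<lambda>x. f x * g x) = \<psi> f * \<psi> g"
  by (simp add: bchar_def)
lemma bchar_cmult: "bchar \<psi> \<Longrightarrow> f \<in> Balg \<Longrightarrow> \<psi> (\<lambda>x. c * f x) = c * \<psi> f"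
  by (simp add: bchar_def)
lemma bchar_e: "bchar \<psi> \<Longrightarrow> \<psi> eK = 1"
  by (simp add: bchar_def)
lemma bchar_diff: "bchar \<psi> \<Longrightarrow> f \<in> Balg \<Longrightarrow> g \<in> Balg \<Longrightarrow> \<psi> (\<lambda>x. f x - g x) = \<psi> f - \<psi> g"
proof -
  assume a: "bchar \<psi>" "f \<in> Balg" "g \<in> Balg"
  have "(\<lambda>x. f x - g x) = (\<lambda>x. f x + (-1) * g x)" by auto
  moreover have "\<psi> (\<lambda>x. f x + (-1) * g x) = \<psi> f + \<psi> (\<lambda>x. (-1) * g x)"
    using bchar_add[OF a(1) a(2) B_cmult[OF a(3), of "-1"]] by simp
  moreover have "\<psi> (\<lambda>x. (-1) * g x) = - \<psi> g"
    using bchar_cmult[OF a(1) a(3), of "-1"] by simp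
  ultimately show ?thesis by simp
qed

lemma bchar_sub_const: "bchar \<psi> \<Longrightarrow> f \<in> Balg \<Longrightarrow> \<psi> (\<lambda>x. f x - c * eK x) = \<psi> f - c"
  using bchar_diff[of \<psi> f "\<lambda>x. c * eK x"] B_cmult[OF eK_B, of c] bchar_cmult[OF _ eK_B, of \<psi> c] bchar_e[of \<psi>]
  by simp

lemma B_sub_const: "f \<in> Balg \<Longrightarrow> (\<lambda>x. f x - c * eK x) \<in> Balg"
  by (intro B_diff B_cmult eK_B)

lemma bchar_inv:
  assumes "bchar \<psi>" "h \<in> Balg" "\<And>x. x \<in> Kset \<Longrightarrow> h x \<noteq> 0"
  shows "\<psi> h \<noteq> 0"
proof -
  have hc: "continuous_on Kset h" and hh: "(\<lambda>z. h (z, 1)) holomorphic_on ball 0 1"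
    using B_D[OF assms(2)] by auto
  let ?h' = "kr (\<lambda>x. 1 / h x)"
  have h'B: "?h' \<in> Balg"
    apply (rule kr_in_B)
     apply (rule continuous_on_divide) using hc assms(3) apply (auto intro: continuous_intros)[3]
    apply (rule holomorphic_on_divide) using hh assms(3) ball_K by (auto intro: holomorphic_intros)
  have "(\<lambda>x. h x * ?h' x) = eK"
    using assms(3) B_D(3)[OF assms(2)] by (auto simp: kr_def eK_def)
  then have "\<psi> h * \<psi> ?h' = 1"
    using bchar_mult[OF assms(1) assms(2) h'B] bchar_e[OF assms(1)] by simp
  then show ?thesis by auto
qed

lemma bchar_spec:
  assumes "bchar \<psi>" "h \<in> Balg"
  shows "\<exists>x\<in>Kset. h x = \<psi> h"
proof (rule ccontr)
  assume "\<not> ?thesis"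
  then have "\<And>x. x \<in> Kset \<Longrightarrow> h x - \<psi> h * eK x \<noteq> 0" by (auto simp: eK_def kr_def)
  from bchar_inv[OF assms(1) B_sub_const[OF assms(2)] this] show False
    using bchar_sub_const[OF assms] by simp
qed

lemma sos3:
  assumes ch: "bchar \<psi>" and B: "P1 \<in> Balg" "Q1 \<in> Balg" "P2 \<in> Balg" "Q2 \<in> Balg" "P3 \<in> Balg" "Q3 \<in> Balg"
    and cj: "\<And>x. x \<in> Kset \<Longrightarrow> Q1 x = cnj (P1 x) \<and> Q2 x = cnj (P2 x) \<and> Q3 x = cnj (P3 x)"
    and z: "\<psi> P1 = 0" "\<psi> P2 = 0" "\<psi> P3 = 0"
  shows "\<exists>x\<in>Kset. P1 x = 0 \<and> P2 x = 0 \<and> P3 x = 0"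
proof (rule ccontr)
  assume nz: "\<not> ?thesis"
  let ?A = "\<lambda>x. P1 x * Q1 x + P2 x * Q2 x"
  let ?G = "\<lambda>x. ?A x + P3 x * Q3 x"
  have AB: "?A \<in> Balg" using B by (intro B_add B_mult)
  have GB: "?G \<in> Balg" using B by (intro B_add B_mult)
  have "\<psi> ?A = 0"
    using bchar_add[OF ch B_mult[OF B(1,2)] B_mult[OF B(3,4)]] bchar_mult[OF ch B(1,2)] bchar_mult[OF ch B(3,4)] z
    by simp
  then have "\<psi> ?G = 0"
    using bchar_add[OF ch AB B_mult[OF B(5,6)]] bchar_mult[OF ch B(5,6)] z by simp
  moreover have "?G x \<noteq> 0" if x: "x \<in> Kset" for x
  proof -
    have "?G x = of_real ((cmod (P1 x))\<^sup>2 + (cmod (P2 x))\<^sup>2 + (cmod (P3 x))\<^sup>2)"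
      using cj[OF x] unfolding of_real_add complex_norm_square by simp
    moreover have "(cmod (P1 x))\<^sup>2 + (cmod (P2 x))\<^sup>2 + (cmod (P3 x))\<^sup>2 > 0"
      using nz x by (auto simp: add_pos_nonneg add_nonneg_pos)
    ultimately show ?thesis by (metis of_real_eq_0_iff less_irrefl)
  qed
  ultimately show False using bchar_inv[OF ch GB] by blast
qed

lemma char_s_ne1:
  assumes ch: "bchar \<psi>" and s1: "\<psi> TK \<noteq> 1"
  shows "\<exists>x\<in>Kset. \<forall>f\<in>Balg. \<psi> f = f x"
proof -
  define a where "a = \<psi> ZK"
  define s where "s = \<psi> TK"
  have key: "\<exists>t. (a, t) \<in> Kset \<and> complex_of_real t = s \<and> f (a, t) = \<psi> f" if fB: "f \<in> Balg" for f
  proof -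
    define c where "c = \<psi> f"
    have fc: "continuous_on Kset f" using B_D[OF fB] by auto
    let ?P1 = "\<lambda>x. (eK x - TK x) * (f x - c * eK x)"
    let ?Q1 = "kr (\<lambda>x. (1 - complex_of_real (snd x)) * cnj (f x - c))"
    let ?P2 = "\<lambda>x. (eK x - TK x) * (ZK x - a * eK x)"
    let ?Q2 = "kr (\<lambda>x. (1 - complex_of_real (snd x)) * cnj (fst x - a))"
    let ?P3 = "\<lambda>x. TK x - s * eK x"
    let ?Q3 = "\<lambda>x. TK x - cnj s * eK x"
    have eT: "(\<lambda>x. eK x - TK x) \<in> Balg" by (intro B_diff eK_B TK_B)
    have B1: "?P1 \<in> Balg" using fB by (intro B_mult eT B_sub_const)
    have B2: "?P2 \<in> Balg" by (intro B_mult eT B_sub_const ZK_B)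
    have B3: "?P3 \<in> Balg" "?Q3 \<in> Balg" by (intro B_sub_const TK_B)+
    have C1: "?Q1 \<in> Balg"
      by (rule kr_in_B) (auto intro!: continuous_intros fc holomorphic_intros)
    have C2: "?Q2 \<in> Balg"
      by (rule kr_in_B) (auto intro!: continuous_intros holomorphic_intros)
    have z1: "\<psi> ?P1 = 0"
      using bchar_mult[OF ch eT B_sub_const[OF fB]] bchar_sub_const[OF ch fB] bchar_diff[OF ch eK_B TK_B]
      by (simp add: c_def)
    have z2: "\<psi> ?P2 = 0"
      using bchar_mult[OF ch eT B_sub_const[OF ZK_B]] bchar_sub_const[OF ch ZK_B] bchar_diff[OF ch eK_B TK_B]
      by (simp add: a_def)
    have z3: "\<psi> ?P3 = 0"
      using bchar_sub_const[OF ch TK_B] by (simp add: s_def)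
    have cj: "?Q1 x = cnj (?P1 x) \<and> ?Q2 x = cnj (?P2 x) \<and> ?Q3 x = cnj (?P3 x)" if "x \<in> Kset" for x
      using that by (simp add: kr_def eK_def TK_def ZK_def)
    obtain x where x: "x \<in> Kset" "?P1 x = 0" "?P2 x = 0" "?P3 x = 0"
      using sos3[OF ch B1 C1 B2 C2 B3(1) B3(2) cj z1 z2 z3] by blast
    obtain z t where xz: "x = (z, t)" by (cases x)
    have st: "complex_of_real t = s" using x(1,4) by (simp add: xz kr_def eK_def TK_def)
    then have t1: "1 - complex_of_real t \<noteq> 0" using s1 s_def by auto
    have "f x = c" using x(1,2) t1 by (simp add: xz kr_def eK_def TK_def)
    moreover have "z = a" using x(1,3) t1 by (simp add: xz kr_def eK_def TK_def ZK_def)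
    ultimately show ?thesis using x(1) st xz c_def by blast
  qed
  obtain t0 where t0: "(a, t0) \<in> Kset" "complex_of_real t0 = s"
    using key[OF eK_B] by blast
  have "\<forall>f\<in>Balg. \<psi> f = f (a, t0)"
  proof
    fix f assume "f \<in> Balg"
    then obtain t where "complex_of_real t = s" "f (a, t) = \<psi> f" using key by blast
    moreover from this(1) t0(2) have "t = t0" by (metis of_real_eq_iff)
    ultimately show "\<psi> f = f (a, t0)" by simp
  qed
  with t0 show ?thesis by blast
qed

lemma char_a:
  assumes ch: "bchar \<psi>"
  shows "\<psi> ZK \<in> cball 0 1"
proof (rule ccontr)
  assume na: "\<psi> ZK \<notin> cball 0 1"
  have "\<And>x. x \<in> Kset \<Longrightarrow> ZK x - \<psi> ZK * eK x \<noteq> 0"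
    using na by (auto simp: ZK_def eK_def kr_def Kset_def)
  from bchar_inv[OF ch B_sub_const[OF ZK_B] this] show False
    using bchar_sub_const[OF ch ZK_B] by simp
qed

lemma char_vanish:
  assumes ch: "bchar \<psi>" and s1: "\<psi> TK = 1" and gB: "g \<in> Balg"
    and g1: "\<And>z. cmod z \<le> 1 \<Longrightarrow> g (z, 1) = 0"
  shows "\<psi> g = 0"
proof (rule ccontr)
  assume nz: "\<psi> g \<noteq> 0"
  define c where "c = \<psi> g"
  have gc: "continuous_on Kset g" using B_D[OF gB] by auto
  let ?P1 = "\<lambda>x. g x - c * eK x"
  let ?Q1 = "kr (\<lambda>x. cnj (g x - c))"
  let ?P2 = "\<lambda>x. TK x - 1 * eK x"
  have B1: "?P1 \<in> Balg" using gB by (rule B_sub_const)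
  have B2: "?P2 \<in> Balg" by (intro B_sub_const TK_B)
  have C1: "?Q1 \<in> Balg"
  proof (rule kr_in_B)
    show "continuous_on Kset (\<lambda>x. cnj (g x - c))" by (intro continuous_intros gc)
    have "(\<lambda>z. cnj (0 - c)) holomorphic_on ball 0 1" by (rule holomorphic_intros)
    then show "(\<lambda>z. cnj (g (z, 1) - c)) holomorphic_on ball 0 1"
      by (rule holomorphic_transform) (simp add: g1 less_imp_le)
  qed
  have z1: "\<psi> ?P1 = 0" using bchar_sub_const[OF ch gB] by (simp add: c_def)
  have z2: "\<psi> ?P2 = 0" using bchar_sub_const[OF ch TK_B, of 1] s1 by simp
  have cj: "?Q1 x = cnj (?P1 x) \<and> ?P2 x = cnj (?P2 x) \<and> ?P2 x = cnj (?P2 x)" if "x \<in> Kset" for x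
    using that by (simp add: kr_def eK_def TK_def)
  obtain x where x: "x \<in> Kset" "?P1 x = 0" "?P2 x = 0"
    using sos3[OF ch B1 C1 B2 B2 B2 B2 cj z1 z2 z2] by blast
  obtain z t where xz: "x = (z, t)" by (cases x)
  have "t = 1" using x(1,3) by (simp add: xz kr_def eK_def TK_def)
  then have "g x = 0" using x(1) g1 by (simp add: xz Kset_def)
  then have "c = 0" using x(1,2) by (simp add: eK_def kr_def)
  with nz show False by (simp add: c_def)
qed

definition "Eop f = kr (\<lambda>x. f (fst x, 1))"

lemma Eop_B:
  assumes fB: "f \<in> Balg"
  shows "Eop f \<in> Balg"
  unfolding Eop_def
proof (rule kr_in_B)
  have fc: "continuous_on Kset f" using B_D[OF fB] by auto
  have "continuous_on Kset (\<lambda>x. (fst x, 1::real))" by (intro continuous_intros)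
  moreover have "(\<lambda>x. (fst x, 1::real)) ` Kset \<subseteq> Kset" by (auto simp: Kset_def)
  ultimately show "continuous_on Kset (\<lambda>x. f (fst x, 1))"
    using continuous_on_compose2[OF fc] by blast
  show "(\<lambda>z. f (fst (z, 1::real), 1)) holomorphic_on ball 0 1" using B_D[OF fB] by simp
qed

lemma char_E:
  assumes ch: "bchar \<psi>" and s1: "\<psi> TK = 1" and fB: "f \<in> Balg"
  shows "\<psi> f = \<psi> (Eop f)"
proof -
  have "\<psi> (\<lambda>x. f x - Eop f x) = 0"
    by (rule char_vanish[OF ch s1 B_diff[OF fB Eop_B[OF fB]]]) (auto simp: Eop_def kr_def Kset_def)
  then show ?thesis using bchar_diff[OF ch fB Eop_B[OF fB]] by simp
qed

lemma char_dil:
  assumes ch: "bchar \<psi>" and fB: "f \<in> Balg" and r: "0 < r" "r < 1"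
  shows "\<psi> (kr (\<lambda>x. f (complex_of_real r * fst x, 1))) = f (complex_of_real r * \<psi> ZK, 1)"
proof -
  define a where "a = \<psi> ZK"
  have a: "a \<in> cball 0 1" using char_a[OF ch] by (simp add: a_def)
  define h where "h = (\<lambda>z. f (complex_of_real r * z, 1))"
  have sub: "cball 0 1 \<subseteq> ball (0::complex) (1/r)"
  proof
    fix x :: complex assume "x \<in> cball 0 1"
    then have "cmod x \<le> 1" by simp
    then have "r * cmod x \<le> r" using r mult_left_le[of "cmod x" r] by simp
    then have "r * cmod x < 1" using r by linarith
    then show "x \<in> ball 0 (1/r)" using r by (simp add: field_simps)
  qed
  have hh: "h holomorphic_on ball 0 (1/r)"
  proof -
    have "((\<lambda>z. f (z, 1)) \<circ> (\<lambda>z. complex_of_real r * z)) holomorphic_on ball 0 (1/r)"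
    proof (rule holomorphic_on_compose_gen)
      show "(*) (complex_of_real r) holomorphic_on ball 0 (1 / r)" by (intro holomorphic_intros)
      show "(\<lambda>z. f (z, 1)) holomorphic_on ball 0 1" using B_D[OF fB] by simp
      show "(*) (complex_of_real r) ` ball 0 (1 / r) \<subseteq> ball 0 1"
        using r by (auto simp: norm_mult field_simps)
    qed
    then show ?thesis by (simp add: h_def o_def)
  qed
  define k where "k = (\<lambda>z. if z = a then deriv h a else (h z - h a) / (z - a))"
  have hk: "k holomorphic_on ball 0 (1/r)" unfolding k_def by (rule pole_lemma_open[OF hh]) simp
  have kc: "continuous_on (cball 0 1) k"
    using holomorphic_on_imp_continuous_on[OF hk] sub continuous_on_subset by blast
  have hc: "continuous_on (cball 0 1) h"
    using holomorphic_on_imp_continuous_on[OF hh] sub continuous_on_subset by blast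
  have fstK: "fst ` Kset \<subseteq> cball 0 1" by (auto simp: Kset_def)
  have cfst: "continuous_on Kset fst" by (intro continuous_intros)
  have KB: "kr (\<lambda>x. k (fst x)) \<in> Balg"
  proof (rule kr_in_B)
    show "continuous_on Kset (\<lambda>x. k (fst x))"
      using continuous_on_compose2[OF kc cfst fstK] by simp
    show "(\<lambda>z. k (fst (z, 1::real))) holomorphic_on ball 0 1"
      using holomorphic_on_subset[OF hk] sub ball_subset_cball by (simp, blast)
  qed
  have eq: "kr (\<lambda>x. f (complex_of_real r * fst x, 1)) =
      (\<lambda>x. (\<lambda>x. (ZK x - a * eK x) * kr (\<lambda>x. k (fst x)) x) x + h a * eK x)"
  proof
    fix x :: "complex \<times> real"
    show "kr (\<lambda>x. f (complex_of_real r * fst x, 1)) x =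
      (ZK x - a * eK x) * kr (\<lambda>x. k (fst x)) x + h a * eK x"
      by (cases "fst x = a") (auto simp: kr_def ZK_def eK_def k_def h_def)
  qed
  have P: "(\<lambda>x. (ZK x - a * eK x) * kr (\<lambda>x. k (fst x)) x) \<in> Balg"
    by (intro B_mult B_sub_const ZK_B KB)
  have "\<psi> (kr (\<lambda>x. f (complex_of_real r * fst x, 1))) = h a"
    unfolding eq
    using bchar_add[OF ch P B_cmult[OF eK_B, of "h a"]] bchar_mult[OF ch B_sub_const[OF ZK_B] KB]
      bchar_sub_const[OF ch ZK_B, of a] bchar_cmult[OF ch eK_B, of "h a"] bchar_e[OF ch]
    by (simp add: a_def)
  then show ?thesis by (simp add: h_def a_def)
qed

lemma char_s1:
  assumes ch: "bchar \<psi>" and s1: "\<psi> TK = 1" and fB: "f \<in> Balg"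
  shows "\<psi> f = f (\<psi> ZK, 1)"
proof (rule ccontr)
  define a where "a = \<psi> ZK"
  have a: "a \<in> cball 0 1" using char_a[OF ch] by (simp add: a_def)
  assume ne: "\<psi> f \<noteq> f (\<psi> ZK, 1)"
  define e where "e = cmod (\<psi> f - f (a, 1)) / 3"
  have e: "e > 0" using ne by (simp add: e_def a_def)
  have fc: "continuous_on Kset f" using B_D[OF fB] by auto
  have "continuous_on (cball 0 1) (\<lambda>z. f (z, 1::real))"
  proof -
    have "continuous_on (cball 0 1) (\<lambda>z::complex. (z, 1::real))" by (intro continuous_intros)
    moreover have "(\<lambda>z::complex. (z, 1::real)) ` cball 0 1 \<subseteq> Kset" by (auto simp: Kset_def)
    ultimately show ?thesis using continuous_on_compose2[OF fc] by blast
  qed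
  then have "uniformly_continuous_on (cball 0 1) (\<lambda>z. f (z, 1::real))"
    by (rule compact_uniformly_continuous) simp
  then obtain d where d: "d > 0"
    and dd: "\<And>x x'. x \<in> cball 0 1 \<Longrightarrow> x' \<in> cball 0 1 \<Longrightarrow> dist x' x < d \<Longrightarrow> dist (f (x', 1)) (f (x, 1)) < e"
    unfolding uniformly_continuous_on_def using e by metis
  define r where "r = max (1/2) (1 - d/2)"
  have r: "0 < r" "r < 1" "1 - r < d" using d by (auto simp: r_def)
  have close: "dist (f (complex_of_real r * z, 1)) (f (z, 1)) < e" if z: "z \<in> cball 0 1" for z
  proof (rule dd[OF z])
    have "cmod (complex_of_real r * z) = r * cmod z" using r by (simp add: norm_mult)
    also have "\<dots> \<le> 1" using z r mult_le_one[of r "cmod z"] by simp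
    finally show "complex_of_real r * z \<in> cball 0 1" by simp
    have "dist (complex_of_real r * z) z = cmod ((complex_of_real r - 1) * z)"
      by (simp add: dist_norm algebra_simps)
    also have "\<dots> = (1 - r) * cmod z"
    proof -
      have "complex_of_real r - 1 = complex_of_real (r - 1)" by simp
      then have "cmod (complex_of_real r - 1) = 1 - r" using r by (simp only: norm_of_real)
      then show ?thesis by (simp add: norm_mult)
    qed
    also have "\<dots> \<le> 1 - r" using z r mult_left_le[of "cmod z" "1 - r"] by simp
    finally show "dist (complex_of_real r * z) z < d" using r by linarith
  qed
  let ?F = "kr (\<lambda>x. f (complex_of_real r * fst x, 1))"
  have FB: "?F \<in> Balg"
  proof (rule kr_in_B)
    have sub: "(\<lambda>x. (complex_of_real r * fst x, 1::real)) ` Kset \<subseteq> Kset"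
      using r by (auto simp: Kset_def norm_mult intro!: mult_le_one)
    have "continuous_on Kset (\<lambda>x. (complex_of_real r * fst x, 1::real))" by (intro continuous_intros)
    then show "continuous_on Kset (\<lambda>x. f (complex_of_real r * fst x, 1))"
      using continuous_on_compose2[OF fc _ sub] by blast
    have "((\<lambda>z. f (z, 1)) \<circ> (\<lambda>z. complex_of_real r * z)) holomorphic_on ball 0 1"
    proof (rule holomorphic_on_compose_gen)
      show "(*) (complex_of_real r) holomorphic_on ball 0 1" by (intro holomorphic_intros)
      show "(\<lambda>z. f (z, 1)) holomorphic_on ball 0 1" using B_D[OF fB] by simp
      show "(*) (complex_of_real r) ` ball 0 1 \<subseteq> ball 0 1"
        using r by (auto simp: norm_mult) (metis le_less_trans mult_left_le less_imp_le)
    qed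
    then show "(\<lambda>z. f (complex_of_real r * fst (z, 1::real), 1)) holomorphic_on ball 0 1"
      by (simp add: o_def)
  qed
  have psiF: "\<psi> ?F = f (complex_of_real r * a, 1)"
    using char_dil[OF ch fB r(1,2)] by (simp add: a_def)
  obtain x where x: "x \<in> Kset" "(\<lambda>x. Eop f x - ?F x) x = \<psi> (\<lambda>x. Eop f x - ?F x)"
    using bchar_spec[OF ch B_diff[OF Eop_B[OF fB] FB]] by blast
  have "\<psi> (\<lambda>x. Eop f x - ?F x) = \<psi> f - f (complex_of_real r * a, 1)"
    using bchar_diff[OF ch Eop_B[OF fB] FB] char_E[OF ch s1 fB] psiF by simp
  moreover have "(\<lambda>x. Eop f x - ?F x) x = f (fst x, 1) - f (complex_of_real r * fst x, 1)"
    using x(1) by (simp add: Eop_def kr_def)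
  moreover have "fst x \<in> cball 0 1" using x(1) by (auto simp: Kset_def)
  ultimately have 1: "cmod (\<psi> f - f (complex_of_real r * a, 1)) < e"
    using close[of "fst x"] x(2) by (simp add: dist_norm norm_minus_commute)
  have 2: "cmod (f (complex_of_real r * a, 1) - f (a, 1)) < e"
    using close[OF a] by (simp add: dist_norm)
  have "cmod (\<psi> f - f (a, 1)) \<le> cmod (\<psi> f - f (complex_of_real r * a, 1)) + cmod (f (complex_of_real r * a, 1) - f (a, 1))"
    using norm_triangle_ineq[of "\<psi> f - f (complex_of_real r * a, 1)" "f (complex_of_real r * a, 1) - f (a, 1)"] by simp
  then have "cmod (\<psi> f - f (a, 1)) < 2 * e" using 1 2 by linarith
  then show False using e by (simp add: e_def)
qed

lemma bchar_eval:
  assumes ch: "bchar \<psi>"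
  shows "\<exists>x\<in>Kset. \<forall>f\<in>Balg. \<psi> f = f x"
proof (cases "\<psi> TK = 1")
  case True
  have "(\<psi> ZK, 1) \<in> Kset" using char_a[OF ch] by (auto simp: Kset_def)
  then show ?thesis using char_s1[OF ch True] by blast
next
  case False
  then show ?thesis using char_s_ne1[OF ch] by blast
qed

lemma A_B: "f \<in> Aalg \<Longrightarrow> f \<in> Balg" by (simp add: Aalg_def)
lemma A_add: "f \<in> Aalg \<Longrightarrow> g \<in> Aalg \<Longrightarrow> (\<lambda>x. f x + g x) \<in> Aalg"
  by (auto simp: Aalg_def intro: B_add)
lemma A_cmult: "f \<in> Aalg \<Longrightarrow> (\<lambda>x. c * f x) \<in> Aalg"
  by (auto simp: Aalg_def intro: B_cmult)
lemma A_ideal: "f \<in> Balg \<Longrightarrow> g \<in> Aalg \<Longrightarrow> (\<lambda>x. f x * g x) \<in> Aalg"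
  by (auto simp: Aalg_def intro: B_mult)
lemma A_mult: "f \<in> Aalg \<Longrightarrow> g \<in> Aalg \<Longrightarrow> (\<lambda>x. f x * g x) \<in> Aalg"
  by (auto simp: Aalg_def intro: B_mult)

lemma char_A_eval:
  assumes phi: "\<phi> \<in> char_space Aalg"
  shows "\<exists>x \<in> Kset - {(0, 1)}. \<phi> = restrict (\<lambda>f. f x) Aalg"
proof -
  have ext: "\<phi> \<in> extensional Aalg" and ch: "character Aalg \<phi>" using phi by (auto simp: char_space_def)
  have add: "\<And>f g. f \<in> Aalg \<Longrightarrow> g \<in> Aalg \<Longrightarrow> \<phi> (\<lambda>x. f x + g x) = \<phi> f + \<phi> g"
    and cm: "\<And>c f. f \<in> Aalg \<Longrightarrow> \<phi> (\<lambda>x. c * f x) = c * \<phi> f"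
    and mu: "\<And>f g. f \<in> Aalg \<Longrightarrow> g \<in> Aalg \<Longrightarrow> \<phi> (\<lambda>x. f x * g x) = \<phi> f * \<phi> g"
    using ch by (auto simp: character_def)
  obtain g where gA: "g \<in> Aalg" and g0: "\<phi> g \<noteq> 0" using ch by (auto simp: character_def)
  define \<psi> where "\<psi> = (\<lambda>f. \<phi> (\<lambda>x. f x * g x) / \<phi> g)"
  have psiA: "\<psi> f = \<phi> f" if "f \<in> Aalg" for f
    using mu[OF that gA] g0 by (simp add: \<psi>_def)
  have "bchar \<psi>"
    unfolding bchar_def
  proof (intro conjI ballI allI)
    fix f h assume f: "f \<in> Balg" and h: "h \<in> Balg"
    have "(\<lambda>x. (f x + h x) * g x) = (\<lambda>x. f x * g x + h x * g x)" by (auto simp: algebra_simps)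
    then show "\<psi> (\<lambda>x. f x + h x) = \<psi> f + \<psi> h"
      using add[OF A_ideal[OF f gA] A_ideal[OF h gA]] by (simp add: \<psi>_def add_divide_distrib)
    have "\<phi> (\<lambda>x. f x * g x) * \<phi> (\<lambda>x. h x * g x) = \<phi> (\<lambda>x. (f x * h x * g x) * g x)"
      using mu[OF A_ideal[OF f gA] A_ideal[OF h gA]] by (simp add: algebra_simps)
    also have "\<dots> = \<phi> (\<lambda>x. f x * h x * g x) * \<phi> g"
      using mu[OF A_ideal[OF B_mult[OF f h] gA] gA] by simp
    finally show "\<psi> (\<lambda>x. f x * h x) = \<psi> f * \<psi> h"
      using g0 by (simp add: \<psi>_def field_simps power2_eq_square)
  next
    fix c f assume f: "f \<in> Balg"
    have "(\<lambda>x. c * f x * g x) = (\<lambda>x. c * (f x * g x))" by (auto simp: algebra_simps)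
    then show "\<psi> (\<lambda>x. c * f x) = c * \<psi> f"
      using cm[OF A_ideal[OF f gA]] by (simp add: \<psi>_def)
  next
    have "(\<lambda>x. eK x * g x) = g" using eK_mult[OF A_B[OF gA]] .
    then show "\<psi> eK = 1" using g0 by (simp add: \<psi>_def)
  qed
  then obtain x where x: "x \<in> Kset" and ev: "\<And>f. f \<in> Balg \<Longrightarrow> \<psi> f = f x"
    using bchar_eval by blast
  have phiev: "\<phi> f = f x" if "f \<in> Aalg" for f using psiA[OF that] ev[OF A_B[OF that]] by simp
  have "x \<noteq> (0, 1)"
  proof
    assume "x = (0, 1)"
    then have "\<phi> g = 0" using phiev[OF gA] gA by (simp add: Aalg_def)
    with g0 show False by simp
  qed
  moreover have "\<phi> = restrict (\<lambda>f. f x) Aalg"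
  proof
    fix f show "\<phi> f = restrict (\<lambda>f. f x) Aalg f"
      using ext phiev by (cases "f \<in> Aalg") (auto simp: extensional_def)
  qed
  ultimately show ?thesis using x by blast
qed

lemma eval_char:
  assumes x: "x \<in> Kset - {(0, 1)}"
  shows "restrict (\<lambda>f. f x) Aalg \<in> char_space Aalg"
proof -
  have ex: "\<exists>f\<in>Aalg. f x \<noteq> 0"
  proof (cases "fst x = 0")
    case False
    have "ZK \<in> Aalg" using ZK_B by (simp add: Aalg_def ZK_def kr_def Kset_def)
    moreover have "ZK x \<noteq> 0" using x False by (simp add: ZK_def kr_def)
    ultimately show ?thesis by blast
  next
    case True
    let ?W = "kr (\<lambda>y. 1 - complex_of_real (snd y))"
    have "?W \<in> Balg" by (rule kr_in_B) (auto intro!: continuous_intros holomorphic_intros)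
    then have "?W \<in> Aalg" by (simp add: Aalg_def kr_def Kset_def)
    moreover have "snd x \<noteq> 1" using x True by (cases x) auto
    then have "?W x \<noteq> 0" using x by (simp add: kr_def)
    ultimately show ?thesis by blast
  qed
  show ?thesis
    unfolding char_space_def character_def
    using ex by (auto simp: A_add A_cmult A_mult)
qed

abbreviation "Kp \<equiv> Kset - {(0::complex, 1::real)}"
abbreviation "chi x \<equiv> restrict (\<lambda>f. f x) Aalg"
abbreviation "Xsub \<equiv> {{\<phi> \<in> char_space Aalg. \<phi> f \<in> U} | f U. f \<in> Aalg \<and> open U}"

lemma gen_open:
  assumes "generate_topology_on Xsub W"
  shows "x \<in> Kp \<Longrightarrow> chi x \<in> W \<Longrightarrow> \<exists>e>0. \<forall>y\<in>Kp. dist y x < e \<longrightarrow> chi y \<in> W"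
  using assms
proof (induction rule: generate_topology_on.induct)
  case Empty
  then show ?case by simp
next
  case (Int a b)
  have ia: "chi x \<in> a" "chi x \<in> b" using Int.prems(2) by blast+
  obtain e1 where "e1 > 0" "\<forall>y\<in>Kp. dist y x < e1 \<longrightarrow> chi y \<in> a" using Int.IH(1)[OF Int.prems(1) ia(1)] by blast
  moreover obtain e2 where "e2 > 0" "\<forall>y\<in>Kp. dist y x < e2 \<longrightarrow> chi y \<in> b" using Int.IH(2)[OF Int.prems(1) ia(2)] by blast
  ultimately show ?case by (metis IntI min_less_iff_conj)
next
  case (UN K)
  obtain k where k: "k \<in> K" "chi x \<in> k" using UN.prems(2) by blast
  obtain e where "e > 0" "\<forall>y\<in>Kp. dist y x < e \<longrightarrow> chi y \<in> k" using UN.IH[OF k(1) UN.prems(1) k(2)] by blast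
  with k(1) show ?case by (metis UnionI)
next
  case (Basis s)
  then obtain f V where s: "s = {\<phi> \<in> char_space Aalg. \<phi> f \<in> V}" and fA: "f \<in> Aalg" and V: "open V"
    by blast
  have "f x \<in> V" using Basis fA s by simp
  then obtain e where e: "e > 0" "ball (f x) e \<subseteq> V" using V open_contains_ball by blast
  have fc: "continuous_on Kset f" using B_D[OF A_B[OF fA]] by auto
  then obtain d where d: "d > 0" "\<forall>y\<in>Kset. dist y x < d \<longrightarrow> dist (f y) (f x) < e"
    using Basis(2) e(1) unfolding continuous_on_iff by blast
  have ch_s: "chi y \<in> s" if "y \<in> Kp" "dist y x < d" for y
  proof -
    have yK: "y \<in> Kset" using that(1) by simp
    have "dist (f y) (f x) < e" using d(2) yK that(2) by simp
    then have "f y \<in> ball (f x) e" by (simp add: dist_commute)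
    then have "f y \<in> V" using e(2) by blast
    then show ?thesis using eval_char[OF that(1)] s fA by simp
  qed
  have H: "\<forall>y\<in>Kp. dist y x < d \<longrightarrow> chi y \<in> s"
    by (intro ballI impI ch_s)
  show ?case by (rule exI[of _ d], rule conjI[OF d(1) H])
qed

lemma bump:
  assumes y: "y \<in> Kset" and r: "0 < r" "r \<le> 1 - snd y"
  shows "kr (\<lambda>x. complex_of_real (max 0 (r - dist x y))) \<in> Aalg"
proof -
  have z: "max 0 (r - dist (z, 1::real) y) = 0" for z
  proof -
    have "dist (1::real) (snd y) \<le> dist (z, 1::real) y" using dist_snd_le[of "(z, 1::real)" y] by simp
    moreover have "dist (1::real) (snd y) = 1 - snd y" using y by (auto simp: Kset_def dist_real_def)
    ultimately show ?thesis using r by simp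
  qed
  have "kr (\<lambda>x. complex_of_real (max 0 (r - dist x y))) \<in> Balg"
    by (rule kr_in_B) (auto simp: z intro!: continuous_intros holomorphic_intros)
  then show ?thesis using z[of 0] by (simp add: Aalg_def kr_def)
qed

theorem mainTheorem8:
  shows "char_space Aalg = {restrict (\<lambda>f. f x) Aalg | x. x \<in> Kset - {(0, 1)}}
         \<and> shilov_boundary Aalg = char_space Aalg"
proof
  show M: "char_space Aalg = {restrict (\<lambda>f. f x) Aalg | x. x \<in> Kset - {(0, 1)}}"
    using char_A_eval eval_char by blast
  have top: "topspace (gelfand_topology Aalg) = char_space Aalg"
  proof -
    have "(\<lambda>x. 0) \<in> Aalg" by (simp add: Aalg_def Balg_def)
    then have "char_space Aalg \<in> Xsub" by blast
    then have "\<Union>Xsub = char_space Aalg" by blast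
    then show ?thesis by (simp add: gelfand_topology_def)
  qed
  have "char_space Aalg \<in> {S. is_boundary Aalg S \<and> closedin (gelfand_topology Aalg) S}"
    by (simp add: is_boundary_def closedin_def top)
  then have sub: "shilov_boundary Aalg \<subseteq> char_space Aalg"
    unfolding shilov_boundary_def by blast
  have "\<phi> \<in> S" if phi: "\<phi> \<in> char_space Aalg" and S: "is_boundary Aalg S" "closedin (gelfand_topology Aalg) S"
    for \<phi> S
  proof (rule ccontr)
    assume nS: "\<phi> \<notin> S"
    obtain x where x: "x \<in> Kp" and phix: "\<phi> = chi x" using char_A_eval[OF phi] by blast
    have SM: "S \<subseteq> char_space Aalg" using S(1) by (simp add: is_boundary_def)
    have "openin (gelfand_topology Aalg) (char_space Aalg - S)" using S(2) top by (simp add: closedin_def)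
    then have "generate_topology_on Xsub (char_space Aalg - S)"
      by (simp add: gelfand_topology_def openin_topology_generated_by_iff)
    from gen_open[OF this x] phi nS phix
    obtain e where e: "e > 0" and eS: "\<And>y. y \<in> Kp \<Longrightarrow> dist y x < e \<Longrightarrow> chi y \<notin> S"
      by auto
    define dl where "dl = min (e/2) (1/2)"
    obtain z t where xzt: "x = (z, t)" by (cases x)
    have xK: "cmod z \<le> 1" "0 \<le> t" "t \<le> 1" using x xzt by (auto simp: Kset_def)
    define y where "y = (z, min t (1 - dl))"
    have dl: "0 < dl" "dl \<le> e/2" "dl \<le> 1/2" using e by (auto simp: dl_def)
    have yK: "y \<in> Kset" using xK dl by (auto simp: y_def Kset_def)
    have ys: "snd y \<le> 1 - dl" by (simp add: y_def)
    have dyx: "dist y x \<le> dl"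
      using xK dl by (simp add: y_def xzt dist_Pair_Pair dist_real_def)
    define r where "r = min (e - dist y x) (1 - snd y)"
    have r: "0 < r" "r \<le> 1 - snd y" using dyx dl ys by (auto simp: r_def)
    let ?f = "kr (\<lambda>w. complex_of_real (max 0 (r - dist w y)))"
    have fA: "?f \<in> Aalg" using bump[OF yK r] .
    have yKp: "y \<in> Kp" using yK ys dl by auto
    have cy: "chi y \<in> char_space Aalg" using eval_char[OF yKp] .
    have v: "chi y ?f = complex_of_real r" using fA yK r by (simp add: kr_def)
    have h1: "ereal r \<le> (SUP \<psi>\<in>char_space Aalg. ereal (cmod (\<psi> ?f)))"
      apply (rule SUP_upper2[OF cy]) unfolding v using r by simp
    have h2: "(SUP \<psi>\<in>S. ereal (cmod (\<psi> ?f))) \<le> 0"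
    proof (rule SUP_least)
      fix \<psi> assume psi: "\<psi> \<in> S"
      then obtain w where w: "w \<in> Kp" "\<psi> = chi w" using char_A_eval[OF subsetD[OF SM psi]] by blast
      have "\<not> dist w x < e" using eS w psi by blast
      then have "r \<le> dist w y" using dist_triangle[of w x y] by (auto simp: r_def dist_commute)
      then show "ereal (cmod (\<psi> ?f)) \<le> 0" using w fA by (simp add: kr_def)
    qed
    have h3: "(SUP \<psi>\<in>S. ereal (cmod (\<psi> ?f))) = (SUP \<psi>\<in>char_space Aalg. ereal (cmod (\<psi> ?f)))"
      using S(1) fA by (simp add: is_boundary_def)
    have "ereal r \<le> 0" using order_trans[OF h1[folded h3] h2] .
    then show False using r(1) by simp
  qed
  then have "char_space Aalg \<subseteq> shilov_boundary Aalg"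
    unfolding shilov_boundary_def by blast
  with sub show "shilov_boundary Aalg = char_space Aalg" by blast
qed

end
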